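(* Let $a,b,v$ be integers with $b>a\ge2$ and $v\ge2$, let $u=2$, and set $X:=ab-a-b$. Then $a,b,u,v$ satisfy (1) $a$, $b$ and $2v-1$ are pairwise coprime; (2) $\frac{1}{a}+\frac{1}{b}+\frac{v}{2v-1}>1$; (3) $vab-1=(2v-1)X$, if and only if the triple $(a,b,2v-1)$ is one of $(3,14,5)$, $(3,10,7)$, $(3,8,11)$, $(3,7,19)$, $(4,11,3)$, $(4,5,9)$, $(5,7,3)$. *)

theory Defs
  imports Complex_Main
begin

end

theory Submission
  imports Defs
begin

lemma fwd:
  fixes a b v :: int
  assumes "2 \<le> a" "a < b" "2 \<le> v"
    and E: "v*a*b - 1 = (2*v - 1) * (a*b - a - b)"
  shows "(a, b, 2*v - 1) \<in> {(3,14,5), (3,10,7), (3,8,11), (3,7,19), (4,11,3), (4,5,9), (5,7,3)}"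
proof -
  have E2: "v*(a*b-2*a-2*b) = a*b-a-b-1" using E by (simp add: algebra_simps)
  have Dpos: "a*b-2*a-2*b > 0"
  proof (rule ccontr)
    assume "\<not> ?thesis"
    hence "v*(a*b-2*a-2*b) \<le> 0" using assms(3) by (simp add: mult_nonneg_nonpos)
    moreover have "(a-1)*(b-1) \<ge> 1*2" using assms by (intro mult_mono) auto
    ultimately have "(a-1)*(b-1) = 2" using E2 by (simp add: algebra_simps)
    moreover have "(a-1)*(b-1) \<ge> 1*(b-1)" using assms by (intro mult_right_mono) auto
    ultimately have "b = 3" using assms by auto
    hence "a = 2" using assms(1,2) by linarith
    hence "v*(-4) = 0" using E2 \<open>b = 3\<close> by simp
    thus False using assms(3) by linarith
  qed
  have "v*(a*b-2*a-2*b) \<ge> 2*(a*b-2*a-2*b)" using Dpos assms(3) by (intro mult_right_mono) auto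
  hence K: "(a-3)*(b-3) \<le> 8" using E2 by (simp add: algebra_simps)
  have a5: "a \<le> 5"
  proof (rule ccontr)
    assume "\<not> ?thesis"
    hence "(a-3)*(b-3) \<ge> 3*4" using assms by (intro mult_mono) auto
    thus False using K by simp
  qed
  have b14: "b \<le> 14"
  proof -
    have "a = 3 \<or> a = 4 \<or> a = 5 \<or> a = 2" using a5 assms by auto
    moreover {
      assume "a = 2" hence False using Dpos by simp }
    moreover {
      assume a3: "a = 3"
      hence "(v-2)*(b-6) = 8" using E2 by (simp add: algebra_simps)
      moreover have "b - 6 > 0" using Dpos a3 by simp
      moreover have "v - 2 \<noteq> 0" using calculation by auto
      ultimately have "1*(b-6) \<le> (v-2)*(b-6)" using assms by (intro mult_right_mono) auto
      hence "b \<le> 14" using \<open>(v-2)*(b-6) = 8\<close> by simp }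
    moreover {
      assume "a = 4" hence "b \<le> 11" using K by simp }
    moreover {
      assume "a = 5" hence "b \<le> 7" using K by simp }
    ultimately show ?thesis by fastforce
  qed
  have "a \<in> {2,3,4,5}" using a5 assms by auto
  moreover have "b \<in> {3,4,5,6,7,8,9,10,11,12,13,14}" using b14 assms by simp presburger
  ultimately
  show ?thesis using E2 assms by (elim insertE emptyE; simp; presburger)
qed

theorem lemma3p6:
  fixes a b v :: int
  assumes "2 \<le> a" "a < b" "2 \<le> v"
  shows "(coprime a b \<and> coprime a (2*v - 1) \<and> coprime b (2*v - 1) \<and>
          1 / real_of_int a + 1 / real_of_int b + real_of_int v / real_of_int (2*v - 1) > 1 \<and>
          v*a*b - 1 = (2*v - 1) * (a*b - a - b))
     \<longleftrightarrow> (a, b, 2*v - 1) \<in> {(3,14,5), (3,10,7), (3,8,11), (3,7,19), (4,11,3), (4,5,9), (5,7,3)}"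
proof
  assume "(coprime a b \<and> coprime a (2*v - 1) \<and> coprime b (2*v - 1) \<and>
          1 / real_of_int a + 1 / real_of_int b + real_of_int v / real_of_int (2*v - 1) > 1 \<and>
          v*a*b - 1 = (2*v - 1) * (a*b - a - b))"
  thus "(a, b, 2*v - 1) \<in> {(3,14,5), (3,10,7), (3,8,11), (3,7,19), (4,11,3), (4,5,9), (5,7,3)}"
    using fwd assms by blast
next
  assume "(a, b, 2*v - 1) \<in> {(3,14,5), (3,10,7), (3,8,11), (3,7,19), (4,11,3), (4,5,9), (5,7,3)}"
  hence "(a,b,v) \<in> {(3,14,3), (3,10,4), (3,8,6), (3,7,10), (4,11,2), (4,5,5), (5,7,2)}" by auto
  thus "(coprime a b \<and> coprime a (2*v - 1) \<and> coprime b (2*v - 1) \<and>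
          1 / real_of_int a + 1 / real_of_int b + real_of_int v / real_of_int (2*v - 1) > 1 \<and>
          v*a*b - 1 = (2*v - 1) * (a*b - a - b))"
    by (elim insertE emptyE; simp add: coprime_iff_gcd_eq_1; code_simp)
qed

end
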